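(* A metrizable space $X$ is $\mathcal{K}_{\Omega}$-Lindel\"{o}f if and only if $t(Q_p(X,\mathbb{D}))=\omega$.
   Context: A function $f:X\to Y$ is quasicontinuous if for every $x\in X$, every open $V\ni f(x)$ and every open $U\ni x$ there is a nonempty open $W\subseteq U$ with $f(W)\subseteq V$. $Q_p(X,\mathbb{D})$ is the set of all quasicontinuous functions from $X$ to the discrete space $\mathbb{D}=\{0,1\}$ with the topology of pointwise convergence. $\mathcal{K}_\Omega$ is the set of families $\mathcal{U}$ of open subsets of $X$ such that $X=\bigcup\{\overline{U}:U\in\mathcal{U}\}$, no element of $\mathcal{U}$ is dense in $X$, and for every finite $F\subseteq X$ there is $U\in\mathcal{U}$ with $F\subseteq\overline{U}$. $X$ is $\mathcal{K}_\Omega$-Lindel\"{o}f if each element of $\mathcal{K}_\Omega$ has a countable subfamily belonging to $\mathcal{K}_\Omega$. $t(Z)=\omega$ means: for every $z\in Z$ and $A\subseteq Z$ with $z\in\overline{A}$ there is a countable $B\subseteq A$ with $z\in\overline{B}$. *)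

theory Defs
  imports "HOL-Analysis.Analysis"
begin

definition quasicontinuous_map :: "'a topology \<Rightarrow> 'b topology \<Rightarrow> ('a \<Rightarrow> 'b) \<Rightarrow> bool" where
  "quasicontinuous_map X Y f \<longleftrightarrow>
     (\<forall>x\<in>topspace X. f x \<in> topspace Y) \<and>
     (\<forall>x\<in>topspace X. \<forall>V U. openin Y V \<and> f x \<in> V \<and> openin X U \<and> x \<in> U \<longrightarrow>
        (\<exists>W. openin X W \<and> W \<noteq> {} \<and> W \<subseteq> U \<and> f ` W \<subseteq> V))"

text \<open>The discrete two-point space D = {0,1}, rendered as bool.\<close>
definition D2 :: "bool topology" where
  "D2 = discrete_topology UNIV"

text \<open>Q_p(X,D): quasicontinuous maps X \<rightarrow> D with the topology of pointwise convergence,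
  i.e. as a subspace of the product D^X (functions are extensional outside topspace X).\<close>
definition Qp :: "'a topology \<Rightarrow> ('a \<Rightarrow> bool) topology" where
  "Qp X = subtopology (product_topology (\<lambda>_. D2) (topspace X))
            {f \<in> extensional (topspace X). quasicontinuous_map X D2 f}"

definition countable_tightness :: "'a topology \<Rightarrow> bool" where
  "countable_tightness Z \<longleftrightarrow>
     (\<forall>z\<in>topspace Z. \<forall>A. A \<subseteq> topspace Z \<and> z \<in> Z closure_of A \<longrightarrow>
        (\<exists>B. B \<subseteq> A \<and> countable B \<and> z \<in> Z closure_of B))"

definition K_Omega :: "'a topology \<Rightarrow> 'a set set set" where
  "K_Omega X = {\<U>. (\<forall>U\<in>\<U>. openin X U) \<and>
      topspace X = \<Union>{X closure_of U | U. U \<in> \<U>} \<and>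
      (\<forall>U\<in>\<U>. X closure_of U \<noteq> topspace X) \<and>
      (\<forall>F. finite F \<and> F \<subseteq> topspace X \<longrightarrow> (\<exists>U\<in>\<U>. F \<subseteq> X closure_of U))}"

definition K_Omega_Lindelof :: "'a topology \<Rightarrow> bool" where
  "K_Omega_Lindelof X \<longleftrightarrow>
     (\<forall>\<U>\<in>K_Omega X. \<exists>\<V>. \<V> \<subseteq> \<U> \<and> countable \<V> \<and> \<V> \<in> K_Omega X)"

end

theory Submission
  imports Defs
begin


lemma topspace_D2 [simp]: "topspace D2 = UNIV" by (simp add: D2_def)
lemma openin_D2 [simp]: "openin D2 S" by (simp add: D2_def)

lemma closure_ofD: "z \<in> X closure_of S \<Longrightarrow> openin X T \<Longrightarrow> z \<in> T \<Longrightarrow> \<exists>y\<in>S. y \<in> T"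
  by (auto simp: in_closure_of)

lemma Qp_topspace:
  "topspace (Qp X) = {f \<in> extensional (topspace X). quasicontinuous_map X D2 f}"
  by (auto simp: Qp_def D2_def PiE_def)

lemma Qp_closure:
  assumes S: "S \<subseteq> topspace (Qp X)"
  shows "z \<in> Qp X closure_of S \<longleftrightarrow> z \<in> topspace (Qp X) \<and>
     (\<forall>F. finite F \<and> F \<subseteq> topspace X \<longrightarrow> (\<exists>s\<in>S. \<forall>x\<in>F. s x = z x))"
proof -
  define Sub where "Sub = {f \<in> extensional (topspace X). quasicontinuous_map X D2 f}"
  have QS: "Qp X = subtopology (product_topology (\<lambda>_. D2) (topspace X)) Sub"
    by (simp add: Qp_def Sub_def)
  have TS: "topspace (Qp X) = Sub" by (simp add: Qp_topspace Sub_def)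
  show ?thesis
  proof
    assume z: "z \<in> Qp X closure_of S"
    then have zt: "z \<in> Sub" using closure_of_subset_topspace TS by fast
    show "z \<in> topspace (Qp X) \<and>
       (\<forall>F. finite F \<and> F \<subseteq> topspace X \<longrightarrow> (\<exists>s\<in>S. \<forall>x\<in>F. s x = z x))"
    proof (intro conjI allI impI)
      fix F assume F: "finite F \<and> F \<subseteq> topspace X"
      define U where "U = PiE (topspace X) (\<lambda>i. if i \<in> F then {z i} else UNIV)"
      have fin: "finite {i \<in> topspace X. (if i \<in> F then {z i} else UNIV) \<noteq> topspace D2}"
        by (rule finite_subset[of _ F]) (use F in auto)
      have "openin (product_topology (\<lambda>_. D2) (topspace X)) U"
        unfolding U_def openin_PiE_gen using fin by (simp add: D2_def)
      then have o: "openin (Qp X) (U \<inter> Sub)"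
        unfolding QS by (auto simp: openin_subtopology)
      have "z \<in> U" using zt by (auto simp: U_def Sub_def PiE_def)
      then obtain y where y: "y \<in> S" "y \<in> U \<inter> Sub" using closure_ofD[OF z o] zt by blast
      have "y x = z x" if "x \<in> F" for x
      proof -
        have "y x \<in> (if x \<in> F then {z x} else UNIV)"
          using PiE_mem[of y "topspace X" "\<lambda>i. if i \<in> F then {z i} else UNIV" x] y F that
          unfolding U_def by blast
        then show ?thesis using that by simp
      qed
      then show "\<exists>s\<in>S. \<forall>x\<in>F. s x = z x" using y(1) by blast
    qed (use zt TS in simp)
  next
    assume R: "z \<in> topspace (Qp X) \<and>
       (\<forall>F. finite F \<and> F \<subseteq> topspace X \<longrightarrow> (\<exists>s\<in>S. \<forall>x\<in>F. s x = z x))"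
    show "z \<in> Qp X closure_of S"
      unfolding in_closure_of
    proof (intro conjI allI impI)
      fix T assume T: "z \<in> T \<and> openin (Qp X) T"
      then obtain U where U: "openin (product_topology (\<lambda>_. D2) (topspace X)) U"
        and TU: "T = U \<inter> Sub"
        unfolding QS openin_subtopology by blast
      have "z \<in> U" using T TU by auto
      then obtain V where V: "finite {i \<in> topspace X. V i \<noteq> topspace D2}" 
        "z \<in> PiE (topspace X) V" "PiE (topspace X) V \<subseteq> U"
        using U unfolding openin_product_topology_alt by blast
      define F where "F = {i \<in> topspace X. V i \<noteq> topspace D2}"
      obtain s where s: "s \<in> S" "\<forall>x\<in>F. s x = z x" using R V(1) unfolding F_def by force
      have st: "s \<in> Sub" using s S TS by auto
      have "s x \<in> V x" if "x \<in> topspace X" for x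
      proof (cases "V x = UNIV")
        case False
        then have "s x = z x" using s(2) that unfolding F_def by simp
        then show ?thesis using V(2) that by (auto simp: PiE_def Pi_def)
      qed simp
      then have "s \<in> PiE (topspace X) V"
        using st unfolding Sub_def by (auto simp: PiE_def Pi_def)
      then show "\<exists>y. y \<in> S \<and> y \<in> T" using s st V(3) TU by blast
    qed (use R in auto)
  qed
qed



lemma quasicont_closure_ind:
  assumes "openin X U"
  shows "quasicontinuous_map X D2 (restrict (\<lambda>x. x \<in> X closure_of U) (topspace X))"
  unfolding quasicontinuous_map_def
proof (intro conjI ballI allI impI)
  fix x V U' assume x: "x \<in> topspace X" and H: "openin D2 V \<and> restrict (\<lambda>x. x \<in> X closure_of U) (topspace X) x \<in> V \<and> openin X U' \<and> x \<in> U'"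
  let ?h = "restrict (\<lambda>x. x \<in> X closure_of U) (topspace X)"
  show "\<exists>W. openin X W \<and> W \<noteq> {} \<and> W \<subseteq> U' \<and> ?h ` W \<subseteq> V"
  proof (cases "x \<in> X closure_of U")
    case True
    then obtain y where y: "y \<in> U" "y \<in> U'" using H closure_ofD by metis
    have "U \<subseteq> X closure_of U" using assms closure_of_subset openin_subset by metis
    moreover have "U \<subseteq> topspace X" using assms openin_subset by metis
    ultimately have "?h ` (U' \<inter> U) \<subseteq> V" using H True x by auto
    moreover have "openin X (U' \<inter> U)" using H assms by auto
    ultimately show ?thesis using y by blast
  next
    case False
    have o: "openin X (U' - X closure_of U)" using H by (simp add: openin_diff)
    then have "U' - X closure_of U \<subseteq> topspace X" using openin_subset by metis
    then have "?h ` (U' - X closure_of U) \<subseteq> V" using H False x by auto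
    then show ?thesis using o H False by blast
  qed
qed simp

lemma tight_imp_KOL:
  assumes T: "countable_tightness (Qp X)"
  shows "K_Omega_Lindelof X"
  unfolding K_Omega_Lindelof_def
proof
  fix \<U> assume U: "\<U> \<in> K_Omega X"
  define h where "h U = restrict (\<lambda>x. x \<in> X closure_of U) (topspace X)" for U
  define one where "one = restrict (\<lambda>x::'a. True) (topspace X)"
  have Uo: "\<forall>U\<in>\<U>. openin X U" and Ucov: "topspace X = \<Union>{X closure_of U | U. U \<in> \<U>}"
    and Und: "\<forall>U\<in>\<U>. X closure_of U \<noteq> topspace X"
    and Ufin: "\<forall>F. finite F \<and> F \<subseteq> topspace X \<longrightarrow> (\<exists>U\<in>\<U>. F \<subseteq> X closure_of U)"
    using U unfolding K_Omega_def by auto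
  have hQ: "h U \<in> topspace (Qp X)" if "U \<in> \<U>" for U
    unfolding Qp_topspace h_def using quasicont_closure_ind Uo that by auto
  have oneQ: "one \<in> topspace (Qp X)"
    unfolding Qp_topspace one_def quasicontinuous_map_def by auto
  define A where "A = h ` \<U>"
  have AQ: "A \<subseteq> topspace (Qp X)" using hQ A_def by auto
  have "one \<in> Qp X closure_of A"
    unfolding Qp_closure[OF AQ]
  proof (intro conjI allI impI oneQ)
    fix F assume F: "finite F \<and> F \<subseteq> topspace X"
    then obtain U where "U \<in> \<U>" "F \<subseteq> X closure_of U" using Ufin by blast
    then show "\<exists>s\<in>A. \<forall>x\<in>F. s x = one x" using F unfolding A_def h_def one_def by auto
  qed
  then obtain B where B: "B \<subseteq> A" "countable B" "one \<in> Qp X closure_of B"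
    using T oneQ AQ unfolding countable_tightness_def by blast
  have BQ: "B \<subseteq> topspace (Qp X)" using B AQ by auto
  define pick where "pick b = (SOME U. U \<in> \<U> \<and> h U = b)" for b
  have pick: "pick b \<in> \<U> \<and> h (pick b) = b" if "b \<in> B" for b
    unfolding pick_def by (rule someI_ex) (use that B A_def in auto)
  have key: "\<exists>V\<in>pick ` B. F \<subseteq> X closure_of V" if F: "finite F" "F \<subseteq> topspace X" for F
  proof -
    obtain b where b: "b \<in> B" "\<forall>x\<in>F. b x = one x" using B(3) F unfolding Qp_closure[OF BQ] by blast
    have "F \<subseteq> X closure_of (pick b)"
    proof
      fix x assume "x \<in> F"
      then have "h (pick b) x = True" using b pick F unfolding one_def by auto
      then show "x \<in> X closure_of (pick b)" unfolding h_def using \<open>x \<in> F\<close> F by auto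
    qed
    then show ?thesis using b by blast
  qed
  show "\<exists>\<V>\<subseteq>\<U>. countable \<V> \<and> \<V> \<in> K_Omega X"
  proof (intro exI conjI)
    show "pick ` B \<subseteq> \<U>" using pick by auto
    show "countable (pick ` B)" using B by auto
    show "pick ` B \<in> K_Omega X"
      unfolding K_Omega_def
    proof (intro CollectI conjI ballI allI impI)
      show "openin X U" if "U \<in> pick ` B" for U using that pick Uo by auto
      show "X closure_of U \<noteq> topspace X" if "U \<in> pick ` B" for U using that pick Und by auto
      show "\<exists>U\<in>pick ` B. F \<subseteq> X closure_of U" if "finite F \<and> F \<subseteq> topspace X" for F
        using key that by blast
      show "topspace X = \<Union> {X closure_of U |U. U \<in> pick ` B}"
      proof
        show "topspace X \<subseteq> \<Union> {X closure_of U |U. U \<in> pick ` B}"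
        proof
          fix x assume "x \<in> topspace X"
          then obtain V where "V \<in> pick ` B" "{x} \<subseteq> X closure_of V" using key[of "{x}"] by auto
          then show "x \<in> \<Union> {X closure_of U |U. U \<in> pick ` B}" by blast
        qed
      qed (auto simp: closure_of_subset_topspace[THEN subsetD])
    qed
  qed
qed



lemma closedin_UN_finite:
  "finite A \<Longrightarrow> (\<And>a. a\<in>A \<Longrightarrow> closedin X (f a)) \<Longrightarrow> closedin X (\<Union>a\<in>A. f a)"
  by (rule closedin_Union) auto

lemma eventually_2inv_less:
  assumes "0 < (e::real)" shows "eventually (\<lambda>N. 2 * inverse (real (Suc N)) < e) sequentially"
proof -
  have "eventually (\<lambda>N. inverse (real (Suc N)) < e/2) sequentially"
    by (rule order_tendstoD(2)[OF LIMSEQ_inverse_real_of_nat]) (use assms in simp)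
  then show ?thesis by (rule eventually_mono) linarith
qed

lemma K_OmegaD:
  assumes "\<U> \<in> K_Omega X"
  shows "\<forall>U\<in>\<U>. openin X U" "topspace X = \<Union>{X closure_of U | U. U \<in> \<U>}"
    "\<forall>U\<in>\<U>. X closure_of U \<noteq> topspace X"
    "\<forall>F. finite F \<and> F \<subseteq> topspace X \<longrightarrow> (\<exists>U\<in>\<U>. F \<subseteq> X closure_of U)"
  using assms unfolding K_Omega_def by auto

lemma K_Omega_pt:
  assumes "\<U> \<in> K_Omega X" "x \<in> topspace X"
  shows "\<exists>U\<in>\<U>. x \<in> X closure_of U"
  using K_OmegaD(4)[OF assms(1), rule_format, of "{x}"] assms(2) by simp

context Metric_space
begin

lemma KOL_nowhere_dense_countable:
  assumes KOL: "K_Omega_Lindelof mtopology" and Kc: "closedin mtopology K"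
    and Ki: "mtopology interior_of K = {}"
  shows "countable K"
proof (cases "finite K")
  case True then show ?thesis by (rule countable_finite)
next
  case inf: False
  have KM: "K \<subseteq> M" using Kc closedin_subset by force
  define e where "e m = inverse (real (Suc m))" for m :: nat
  have epos: "0 < e m" for m unfolding e_def by simp
  have emono: "e m \<le> e N" if "N \<le> m" for m N unfolding e_def using that
    by (simp add: le_imp_inverse_le)
  have exx: "\<exists>x. x \<in> mball c r - K" if "c \<in> K" "0 < r" for c r
  proof (rule ccontr)
    assume "\<not> ?thesis"
    then have "mball c r \<subseteq> K" by blast
    then have "mball c r \<subseteq> mtopology interior_of K" by (simp add: interior_of_maximal)
    then show False using Ki that KM by auto
  qed
  have exr: "\<exists>\<rho>. 0 < \<rho> \<and> \<rho> \<le> s \<and> mcball x \<rho> \<inter> K = {}" if "x \<in> M - K" "0 < s" for x s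
  proof -
    have "\<exists>r>0. disjnt K (mball x r)" using Kc that(1) unfolding closedin_metric by blast
    then obtain r where r: "r > 0" "disjnt K (mball x r)" by blast
    have "mcball x (min s (r/2)) \<subseteq> mball x r" using r by (intro mcball_subset_mball_concentric) simp
    then show ?thesis using r that by (intro exI[of _ "min s (r/2)"]) (auto simp: disjnt_def)
  qed
  define xx where "xx c m = (SOME x. x \<in> mball c (e m) - K)" for c m
  have xx: "xx c m \<in> mball c (e m) - K" if "c \<in> K" for c m
    unfolding xx_def by (rule someI_ex) (rule exx[OF that epos])
  define rr where "rr c m = (SOME \<rho>. 0 < \<rho> \<and> \<rho> \<le> e m \<and> mcball (xx c m) \<rho> \<inter> K = {})" for c m
  have rr: "0 < rr c m \<and> rr c m \<le> e m \<and> mcball (xx c m) (rr c m) \<inter> K = {}" if "c \<in> K" for c m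
  proof -
    have "xx c m \<in> M - K" using xx[OF that, of m] mball_subset_mspace by blast
    from exr[OF this epos] show ?thesis unfolding rr_def by (rule someI_ex)
  qed
  define rp where "rp p = (SOME \<rho>. 0 < \<rho> \<and> \<rho> \<le> 1 \<and> mcball p \<rho> \<inter> K = {})" for p
  have rp: "0 < rp p \<and> mcball p (rp p) \<inter> K = {}" if "p \<in> M - K" for p
  proof -
    from exr[OF that, of 1] have "\<exists>\<rho>. 0 < \<rho> \<and> \<rho> \<le> 1 \<and> mcball p \<rho> \<inter> K = {}" by simp
    then have "0 < rp p \<and> rp p \<le> 1 \<and> mcball p (rp p) \<inter> K = {}" unfolding rp_def by (rule someI_ex)
    then show ?thesis by blast
  qed
  define UF where "UF F = (\<Union>c\<in>F\<inter>K. \<Union>m. mball (xx c m) (rr c m)) \<union> (\<Union>p\<in>F-K. mball p (rp p))" for F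
  have UFo: "openin mtopology (UF F)" for F unfolding UF_def by (auto intro!: openin_Un openin_Union)
  have UFcl: "F \<subseteq> mtopology closure_of (UF F)" if F: "finite F" "F \<subseteq> M" for F
  proof
    fix x assume x: "x \<in> F"
    show "x \<in> mtopology closure_of (UF F)"
    proof (cases "x \<in> K")
      case False
      have xM: "x \<in> M" using x F by auto
      have "x \<in> mball x (rp x)" using rp[of x] xM False by auto
      then have "x \<in> UF F" unfolding UF_def using x False by blast
      then show ?thesis using closure_of_subset[OF openin_subset[OF UFo]] by blast
    next
      case True
      show ?thesis unfolding metric_closure_of
      proof (intro CollectI conjI allI impI)
        show "x \<in> M" using x F by auto
        fix r :: real assume r: "0 < r"
        then obtain m where m: "inverse (real (Suc m)) < r" using reals_Archimedean by blast
        have "xx x m \<in> mball (xx x m) (rr x m)" using xx[OF True] rr[OF True] by auto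
        then have "xx x m \<in> UF F" using x True unfolding UF_def by blast
        moreover have "xx x m \<in> mball x r" using xx[OF True, of m] m unfolding e_def by auto
        ultimately show "\<exists>y\<in>UF F. y \<in> mball x r" by blast
      qed
    qed
  qed
  have UFK: "mtopology closure_of (UF F) \<inter> K \<subseteq> F" if F: "finite F" "F \<subseteq> M" for F
  proof
    fix y assume y: "y \<in> mtopology closure_of (UF F) \<inter> K"
    show "y \<in> F"
    proof (rule ccontr)
      assume yF: "y \<notin> F"
      have yM: "y \<in> M" using y KM by auto
      have "\<forall>c\<in>F\<inter>K. eventually (\<lambda>N. 2 * e N < d c y) sequentially"
      proof
        fix c assume c: "c \<in> F \<inter> K"
        then have "0 < d c y" using yF yM KM by auto
        then show "eventually (\<lambda>N. 2 * e N < d c y) sequentially"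
          unfolding e_def by (rule eventually_2inv_less)
      qed
      then have "eventually (\<lambda>N. \<forall>c\<in>F\<inter>K. 2 * e N < d c y) sequentially"
        using F by (intro eventually_ball_finite) auto
      then obtain N where N: "\<forall>c\<in>F\<inter>K. 2 * e N < d c y"
        using eventually_sequentially by auto
      define P' where "P' = (\<Union>c\<in>F\<inter>K. \<Union>m\<in>{..<N}. mcball (xx c m) (rr c m)) \<union> (\<Union>p\<in>F-K. mcball p (rp p))"
      define Q' where "Q' = (\<Union>c\<in>F\<inter>K. mcball c (2 * e N))"
      have "closedin mtopology P'" unfolding P'_def using F
        by (intro closedin_Un closedin_UN_finite) auto
      moreover have "closedin mtopology Q'" unfolding Q'_def using F
        by (intro closedin_UN_finite) auto
      ultimately have cl: "closedin mtopology (P' \<union> Q')" by blast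
      have "UF F \<subseteq> P' \<union> Q'"
      proof
        fix z assume z: "z \<in> UF F"
        show "z \<in> P' \<union> Q'"
        proof (cases "z \<in> (\<Union>p\<in>F-K. mball p (rp p))")
          case True then show ?thesis unfolding P'_def using mball_subset_mcball by blast
        next
          case False
          then obtain c m where c: "c \<in> F \<inter> K" and zb: "z \<in> mball (xx c m) (rr c m)"
            using z unfolding UF_def by blast
          show ?thesis
          proof (cases "m < N")
            case True then show ?thesis unfolding P'_def using c zb mball_subset_mcball by blast
          next
            case False
            have cM: "c \<in> M" using c KM by auto
            have xm: "xx c m \<in> M" "d c (xx c m) < e m" using xx[of c m] c by auto
            have zm: "z \<in> M" "d (xx c m) z < rr c m" using zb by auto
            have "d c z \<le> d c (xx c m) + d (xx c m) z" using triangle cM xm zm by blast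
            also have "\<dots> \<le> e m + e m" using xm zm rr[of c m] c by auto
            also have "\<dots> \<le> 2 * e N" using emono[of N m] False by auto
            finally have "z \<in> mcball c (2 * e N)" using cM zm by auto
            then show ?thesis unfolding Q'_def using c by blast
          qed
        qed
      qed
      then have "mtopology closure_of (UF F) \<subseteq> P' \<union> Q'" using cl by (rule closure_of_minimal)
      then have "y \<in> P' \<union> Q'" using y by blast
      moreover have "y \<notin> P'"
      proof
        assume "y \<in> P'"
        then consider (a) c m where "c \<in> F \<inter> K" "y \<in> mcball (xx c m) (rr c m)"
          | (b) p where "p \<in> F - K" "y \<in> mcball p (rp p)" unfolding P'_def by blast
        then show False
        proof cases
          case a
          then have "mcball (xx c m) (rr c m) \<inter> K = {}" using rr[of c m] by blast
          then show False using a y by blast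
        next
          case b
          then have "p \<in> M - K" using F by blast
          then have "mcball p (rp p) \<inter> K = {}" using rp[of p] by blast
          then show False using b y by blast
        qed
      qed
      moreover have "y \<notin> Q'"
      proof
        assume "y \<in> Q'"
        then obtain c where "c \<in> F \<inter> K" "y \<in> mcball c (2 * e N)" unfolding Q'_def by blast
        then show False using N by force
      qed
      ultimately show False by blast
    qed
  qed
  define \<U> where "\<U> = UF ` {F. finite F \<and> F \<subseteq> M}"
  have UK: "\<U> \<in> K_Omega mtopology"
    unfolding K_Omega_def
  proof (intro CollectI conjI ballI allI impI)
    show "openin mtopology U" if U: "U \<in> \<U>" for U
    proof -
      obtain F where "U = UF F" using U unfolding \<U>_def by blast
      then show ?thesis by (simp add: UFo)
    qed
    show "mtopology closure_of U \<noteq> topspace mtopology" if U: "U \<in> \<U>" for U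
    proof -
      obtain F where F: "finite F" "F \<subseteq> M" "U = UF F" using U unfolding \<U>_def by blast
      obtain y where y: "y \<in> K" "y \<notin> F" using inf F(1) by (metis finite_subset subsetI)
      then have "y \<notin> mtopology closure_of (UF F)" using UFK[OF F(1,2)] by blast
      moreover have "y \<in> topspace mtopology" using y KM by auto
      ultimately show ?thesis using F(3) by auto
    qed
    show "\<exists>U\<in>\<U>. F \<subseteq> mtopology closure_of U" if "finite F \<and> F \<subseteq> topspace mtopology" for F
    proof -
      have "F \<subseteq> mtopology closure_of (UF F)" using that UFcl by simp
      moreover have "UF F \<in> \<U>" using that unfolding \<U>_def by simp
      ultimately show ?thesis by blast
    qed
    show "topspace mtopology = \<Union> {mtopology closure_of U |U. U \<in> \<U>}"
    proof
      show "topspace mtopology \<subseteq> \<Union> {mtopology closure_of U |U. U \<in> \<U>}"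
      proof
        fix x assume x: "x \<in> topspace mtopology"
        then have "x \<in> mtopology closure_of (UF {x})" using UFcl[of "{x}"] by auto
        moreover have "UF {x} \<in> \<U>" using x unfolding \<U>_def by auto
        ultimately show "x \<in> \<Union> {mtopology closure_of U |U. U \<in> \<U>}" by blast
      qed
    qed (use closure_of_subset_topspace[of mtopology] in auto)
  qed
  then obtain \<V> where V: "\<V> \<subseteq> \<U>" "countable \<V>" "\<V> \<in> K_Omega mtopology"
    using KOL unfolding K_Omega_Lindelof_def by blast
  define FF where "FF V = (SOME F. finite F \<and> F \<subseteq> M \<and> V = UF F)" for V
  have FF: "finite (FF V) \<and> FF V \<subseteq> M \<and> V = UF (FF V)" if "V \<in> \<V>" for V
    unfolding FF_def by (rule someI_ex) (use that V(1) \<U>_def in blast)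
  have "K \<subseteq> (\<Union>V\<in>\<V>. FF V)"
  proof
    fix y assume y: "y \<in> K"
    then have "y \<in> topspace mtopology" using KM by auto
    then obtain V where V1: "V \<in> \<V>" "y \<in> mtopology closure_of V"
      using K_Omega_pt[OF V(3)] by blast
    have "finite (FF V)" "FF V \<subseteq> M" "V = UF (FF V)" using FF[OF V1(1)] by auto
    then have "mtopology closure_of V \<inter> K \<subseteq> FF V" using UFK[of "FF V"] by simp
    then show "y \<in> (\<Union>V\<in>\<V>. FF V)" using V1 y by blast
  qed
  moreover have "countable (\<Union>V\<in>\<V>. FF V)"
    using V(2) FF by (intro countable_UN) (auto intro: countable_finite)
  ultimately show ?thesis by (rule countable_subset)
qed

end



lemma qc_pt:
  assumes "quasicontinuous_map X D2 f" "x \<in> topspace X" "openin X U" "x \<in> U"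
  shows "\<exists>W. openin X W \<and> W \<noteq> {} \<and> W \<subseteq> U \<and> W \<subseteq> X interior_of {y \<in> topspace X. f y = f x}"
proof -
  obtain W where W: "openin X W" "W \<noteq> {}" "W \<subseteq> U" "f ` W \<subseteq> {f x}"
    using assms unfolding quasicontinuous_map_def by (metis openin_D2 singletonI)
  then have "W \<subseteq> {y \<in> topspace X. f y = f x}" using openin_subset[OF W(1)] by auto
  then have "W \<subseteq> X interior_of {y \<in> topspace X. f y = f x}" using W(1) by (rule interior_of_maximal)
  then show ?thesis using W by blast
qed

lemma closure_interior_boundary_nowhere:
  "closedin X (X closure_of V - X interior_of S) \<and> X interior_of (X closure_of V - X interior_of S) = {}"
  if "X interior_of S = V" for V S
proof
  show "closedin X (X closure_of V - X interior_of S)" by (intro closedin_diff) auto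
  show "X interior_of (X closure_of V - X interior_of S) = {}"
  proof (rule ccontr)
    let ?W = "X interior_of (X closure_of V - X interior_of S)"
    assume "?W \<noteq> {}"
    then obtain x where x: "x \<in> ?W" by blast
    have o: "openin X ?W" by simp
    have Wsub: "?W \<subseteq> X closure_of V - X interior_of S" by (rule interior_of_subset)
    have "x \<in> X closure_of V" using x Wsub by blast
    then obtain y where "y \<in> V" "y \<in> ?W" using closure_ofD[OF _ o x] by blast
    then show False using that Wsub by blast
  qed
qed

context Metric_space
begin

lemma small_ball_avoid:
  assumes "finite F" "y \<in> M" "y \<notin> F"
  shows "\<exists>r>0. mcball y r \<inter> F = {}"
proof -
  have "\<forall>p\<in>F \<inter> M. eventually (\<lambda>N. 2 * inverse (real (Suc N)) < d y p) sequentially"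
  proof
    fix p assume p: "p \<in> F \<inter> M"
    then have "0 < d y p" using assms by auto
    then show "eventually (\<lambda>N. 2 * inverse (real (Suc N)) < d y p) sequentially"
      by (rule eventually_2inv_less)
  qed
  then have "eventually (\<lambda>N. \<forall>p\<in>F \<inter> M. 2 * inverse (real (Suc N)) < d y p) sequentially"
    using assms by (intro eventually_ball_finite) auto
  then obtain N where N: "\<forall>p\<in>F \<inter> M. 2 * inverse (real (Suc N)) < d y p"
    using eventually_sequentially by auto
  have "mcball y (inverse (real (Suc N))) \<inter> F = {}"
  proof (rule ccontr)
    assume "\<not> ?thesis"
    then obtain p where p: "p \<in> F" "p \<in> mcball y (inverse (real (Suc N)))" by blast
    then have pp: "p \<in> F \<inter> M" "d y p \<le> inverse (real (Suc N))" by auto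
    then have "2 * inverse (real (Suc N)) < d y p" using N by blast
    moreover have "0 < inverse (real (Suc N))" by simp
    ultimately show False using pp(2) by linarith
  qed
  then show ?thesis by (intro exI[of _ "inverse (real (Suc N))"]) simp
qed

lemma KOL_imp_tight:
  assumes KOL: "K_Omega_Lindelof mtopology"
  shows "countable_tightness (Qp mtopology)"
  unfolding countable_tightness_def
proof (intro ballI allI impI)
  fix f A assume fQ: "f \<in> topspace (Qp mtopology)" and AA: "A \<subseteq> topspace (Qp mtopology) \<and> f \<in> Qp mtopology closure_of A"
  have AQ: "A \<subseteq> topspace (Qp mtopology)" and fA: "f \<in> Qp mtopology closure_of A" using AA by auto
  have clA: "\<forall>F. finite F \<and> F \<subseteq> M \<longrightarrow> (\<exists>s\<in>A. \<forall>x\<in>F. s x = f x)"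
    using fA unfolding Qp_closure[OF AQ] by simp
  have fq: "quasicontinuous_map mtopology D2 f" using fQ unfolding Qp_topspace by simp
  have gq: "quasicontinuous_map mtopology D2 g" if "g \<in> A" for g using that AQ unfolding Qp_topspace by auto
  show "\<exists>B\<subseteq>A. countable B \<and> f \<in> Qp mtopology closure_of B"
  proof (cases "finite M")
    case True
    then obtain g where g: "g \<in> A" "\<forall>x\<in>M. g x = f x" using clA by blast
    have gQ: "{g} \<subseteq> topspace (Qp mtopology)" using g AQ by auto
    have "f \<in> Qp mtopology closure_of {g}"
      unfolding Qp_closure[OF gQ] using fQ g by auto
    then show ?thesis using g by (intro exI[of _ "{g}"]) auto
  next
    case infM: False
    define E where "E g = {x \<in> M. g x = f x}" for g :: "'a \<Rightarrow> bool"
    define Vg where "Vg g = mtopology interior_of (E g)" for g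
    define Ob where "Ob b = mtopology interior_of {x \<in> M. f x = b}" for b
    define C where "C = M - (Ob True \<union> Ob False)"
    define Mg where "Mg g = mtopology closure_of (Vg g) - mtopology interior_of (E g)" for g
    have Oo: "openin mtopology (Ob b)" for b unfolding Ob_def by simp
    have Of: "x \<in> Ob b \<Longrightarrow> f x = b" for x b
      using interior_of_subset[of mtopology "{x \<in> M. f x = b}"] unfolding Ob_def by blast
    have Cclosed: "closedin mtopology C" unfolding C_def using Oo
      by (metis closedin_diff closedin_mspace openin_Un)
    have Cint: "mtopology interior_of C = {}"
    proof (rule ccontr)
      let ?W = "mtopology interior_of C"
      assume "?W \<noteq> {}"
      then obtain x where x: "x \<in> ?W" by blast
      have WC: "?W \<subseteq> C" by (rule interior_of_subset)
      have xM: "x \<in> M" using x WC unfolding C_def by blast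
      obtain W where W: "openin mtopology W" "W \<noteq> {}" "W \<subseteq> ?W"
         "W \<subseteq> mtopology interior_of {y \<in> topspace mtopology. f y = f x}"
        using qc_pt[OF fq _ _ x] xM by auto
      then have "W \<subseteq> Ob (f x)" unfolding Ob_def by simp
      moreover have "W \<subseteq> C" using W WC by blast
      moreover have "Ob (f x) \<inter> C = {}" unfolding C_def by (cases "f x") auto
      ultimately show False using W(2) by blast
    qed
    have Ccount: "countable C"
      by (rule KOL_nowhere_dense_countable[OF KOL Cclosed Cint])
    have VE: "Vg g \<subseteq> E g" for g unfolding Vg_def by (rule interior_of_subset)
    have Vo: "openin mtopology (Vg g)" for g unfolding Vg_def by simp
    have EM: "E g \<subseteq> M" for g unfolding E_def by auto
    have Ecl: "E g - C \<subseteq> mtopology closure_of (Vg g)" if g: "g \<in> A" for g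
    proof
      fix x assume x: "x \<in> E g - C"
      then have xM: "x \<in> M" and gx: "g x = f x" unfolding E_def by auto
      have xO: "x \<in> Ob (f x)"
      proof -
        have "x \<in> Ob True \<union> Ob False" using x xM unfolding C_def by blast
        then show ?thesis using Of by (cases "f x") auto
      qed
      show "x \<in> mtopology closure_of (Vg g)"
        unfolding in_closure_of
      proof (intro conjI allI impI)
        show "x \<in> topspace mtopology" using xM by simp
        fix T assume T: "x \<in> T \<and> openin mtopology T"
        then have o: "openin mtopology (T \<inter> Ob (f x))" using Oo by blast
        obtain W where W: "openin mtopology W" "W \<noteq> {}" "W \<subseteq> T \<inter> Ob (f x)"
          "W \<subseteq> mtopology interior_of {y \<in> topspace mtopology. g y = g x}"
        proof -
          have xt: "x \<in> topspace mtopology" using xM by simp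
          have "x \<in> T \<inter> Ob (f x)" using T xO by blast
          from qc_pt[OF gq[OF g] xt o this] show ?thesis using that by blast
        qed
        have "W \<subseteq> E g"
        proof
          fix y assume y: "y \<in> W"
          have "y \<in> {y \<in> topspace mtopology. g y = g x}"
            using y W(4) interior_of_subset[of mtopology "{y \<in> topspace mtopology. g y = g x}"] by blast
          moreover have "f y = f x" using y W(3) Of by blast
          ultimately show "y \<in> E g" using gx unfolding E_def by simp
        qed
        then have "W \<subseteq> Vg g" unfolding Vg_def using W(1) by (rule interior_of_maximal)
        then show "\<exists>y. y \<in> Vg g \<and> y \<in> T" using W(2,3) by blast
      qed
    qed
    have Mgc: "countable (Mg g)" for g
    proof -
      have "closedin mtopology (Mg g) \<and> mtopology interior_of (Mg g) = {}"
        unfolding Mg_def by (rule closure_interior_boundary_nowhere) (simp add: Vg_def)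
      then show ?thesis using KOL_nowhere_dense_countable[OF KOL] by blast
    qed
    have EMg: "x \<in> E g" if "x \<in> mtopology closure_of (Vg g)" "x \<notin> Mg g" for x g
      using that VE unfolding Mg_def Vg_def by blast
    have CM: "C \<subseteq> M" unfolding C_def by blast
    define Tm where "Tm m = (\<Union>c\<in>C. mball c (inverse (real (Suc m))))" for m
    have Tmo: "openin mtopology (Tm m)" for m unfolding Tm_def by (auto intro!: openin_Union)
    have TmM: "Tm m \<subseteq> M" for m unfolding Tm_def using mball_subset_mspace by blast
    have CT: "C \<subseteq> Tm m" for m
    proof
      fix c assume c: "c \<in> C"
      then have "c \<in> mball c (inverse (real (Suc m)))" using CM by auto
      then show "c \<in> Tm m" unfolding Tm_def using c by blast
    qed
    have Tev: "eventually (\<lambda>m. x \<notin> mtopology closure_of (Tm m)) sequentially" if x: "x \<in> M - C" for x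
    proof -
      have "\<exists>r>0. disjnt C (mball x r)" using Cclosed x unfolding closedin_metric by blast
      then obtain r where r: "r > 0" "disjnt C (mball x r)" by blast
      have "eventually (\<lambda>m. 2 * inverse (real (Suc m)) < r) sequentially"
        by (rule eventually_2inv_less[OF r(1)])
      then show ?thesis
      proof (rule eventually_mono)
        fix m assume m: "2 * inverse (real (Suc m)) < r"
        let ?e = "inverse (real (Suc m))"
        show "x \<notin> mtopology closure_of (Tm m)"
        proof
          assume "x \<in> mtopology closure_of (Tm m)"
          then have "\<forall>r>0. \<exists>y\<in>Tm m. y \<in> mball x r" unfolding metric_closure_of by simp
          moreover have "?e > 0" by simp
          ultimately obtain y where y: "y \<in> Tm m" "y \<in> mball x ?e" by blast
          then obtain c where c: "c \<in> C" "y \<in> mball c ?e" unfolding Tm_def by blast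
          have cM: "c \<in> M" using c CM by blast
          have "d x c \<le> d x y + d y c" using triangle[of x y c] y c cM by auto
          also have "\<dots> < ?e + ?e" using y c by (auto simp: commute)
          finally have "c \<in> mball x r" using m cM x by auto
          then show False using r(2) c(1) by (auto simp: disjnt_def)
        qed
      qed
    qed
    have Tsep: "\<exists>m. F \<inter> mtopology closure_of (Tm m) = {}" if F: "finite F" "F \<subseteq> M - C" for F
    proof -
      have "eventually (\<lambda>m. \<forall>x\<in>F. x \<notin> mtopology closure_of (Tm m)) sequentially"
        using F Tev by (intro eventually_ball_finite) auto
      then obtain m where "\<forall>x\<in>F. x \<notin> mtopology closure_of (Tm m)"
        using eventually_sequentially by auto
      then show ?thesis by blast
    qed
    have fam: "\<exists>B. countable B \<and> B \<subseteq> A \<and> (\<forall>g\<in>B. H \<subseteq> E g) \<and>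
        (\<forall>F. finite F \<and> F \<subseteq> M \<longrightarrow> (\<exists>g\<in>B. F \<subseteq> mtopology closure_of (Vg g) \<union> mtopology closure_of (Tm m)))"
      if H: "finite H" "H \<subseteq> M" for H m
    proof -
      define Fam where "Fam = {(Vg g \<union> Tm m) - mtopology closure_of W | g W. g \<in> A \<and> H \<subseteq> E g \<and> openin mtopology W \<and> W \<noteq> {}}"
      have finprop: "\<exists>U\<in>Fam. F \<subseteq> mtopology closure_of U" if F: "finite F" "F \<subseteq> M" for F
      proof -
        obtain g where g: "g \<in> A" "\<forall>x\<in>F \<union> H. g x = f x" using clA F H by (metis finite_UnI Un_subset_iff)
        obtain y where y: "y \<in> M" "y \<notin> F" using infM F(1) by (metis finite_subset subsetI)
        obtain r where r: "r > 0" "mcball y r \<inter> F = {}" using small_ball_avoid[OF F(1) y] by blast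
        let ?W = "mball y r"
        have Wo: "openin mtopology ?W" by simp
        have Wne: "?W \<noteq> {}" using y r by auto
        have clW: "mtopology closure_of ?W \<subseteq> mcball y r"
          by (rule closure_of_minimal) (auto simp: mball_subset_mcball)
        have HE: "H \<subseteq> E g" using H g unfolding E_def by auto
        have VM: "Vg g \<subseteq> M" using Vo[of g] openin_subset by fastforce
        have F1: "F \<subseteq> mtopology closure_of (Vg g \<union> Tm m)"
        proof
          fix x assume x: "x \<in> F"
          show "x \<in> mtopology closure_of (Vg g \<union> Tm m)"
          proof (cases "x \<in> C")
            case True
            then have "x \<in> Tm m" using CT by blast
            then have "x \<in> mtopology closure_of (Tm m)"
              using closure_of_subset[of "Tm m" mtopology] TmM by auto
            then show ?thesis by simp
          next
            case False
            then have "x \<in> E g - C" using x F g unfolding E_def by auto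
            then have "x \<in> mtopology closure_of (Vg g)" using Ecl[OF g(1)] by blast
            then show ?thesis by simp
          qed
        qed
        have F2: "F \<subseteq> M - mtopology closure_of ?W" using F r clW by blast
        have oo: "openin mtopology (M - mtopology closure_of ?W)" by (simp add: openin_diff)
        have "(M - mtopology closure_of ?W) \<inter> mtopology closure_of (Vg g \<union> Tm m)
               \<subseteq> mtopology closure_of ((M - mtopology closure_of ?W) \<inter> (Vg g \<union> Tm m))"
          by (rule openin_Int_closure_of_subset[OF oo])
        moreover have "(M - mtopology closure_of ?W) \<inter> (Vg g \<union> Tm m) = (Vg g \<union> Tm m) - mtopology closure_of ?W"
          using VM TmM by blast
        ultimately have "F \<subseteq> mtopology closure_of ((Vg g \<union> Tm m) - mtopology closure_of ?W)"
          using F1 F2 by auto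
        moreover have "(Vg g \<union> Tm m) - mtopology closure_of ?W \<in> Fam"
          unfolding Fam_def using g(1) HE Wo Wne by blast
        ultimately show ?thesis by blast
      qed
      have "Fam \<in> K_Omega mtopology"
        unfolding K_Omega_def
      proof (intro CollectI conjI ballI allI impI)
        show "openin mtopology U" if U: "U \<in> Fam" for U
        proof -
          obtain g W where "U = (Vg g \<union> Tm m) - mtopology closure_of W" using U unfolding Fam_def by blast
          then show ?thesis by (simp add: openin_diff Vo Tmo openin_Un)
        qed
        show "mtopology closure_of U \<noteq> topspace mtopology" if U: "U \<in> Fam" for U
        proof -
          obtain g W where gW: "U = (Vg g \<union> Tm m) - mtopology closure_of W" "openin mtopology W" "W \<noteq> {}"
            using U unfolding Fam_def by blast
          have WM: "W \<subseteq> M" using gW(2) openin_subset by fastforce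
          have VM: "Vg g \<subseteq> M" using Vo[of g] openin_subset by fastforce
          have "W \<subseteq> mtopology closure_of W" using closure_of_subset[of W mtopology] WM by simp
          then have "U \<subseteq> M - W" using gW(1) VM TmM by blast
          moreover have "closedin mtopology (M - W)" using gW(2) by (simp add: closedin_diff)
          ultimately have "mtopology closure_of U \<subseteq> M - W" by (rule closure_of_minimal)
          then show ?thesis using gW(3) WM by auto
        qed
        show "\<exists>U\<in>Fam. F \<subseteq> mtopology closure_of U" if "finite F \<and> F \<subseteq> topspace mtopology" for F
          using finprop that by simp
        show "topspace mtopology = \<Union> {mtopology closure_of U |U. U \<in> Fam}"
        proof
          show "topspace mtopology \<subseteq> \<Union> {mtopology closure_of U |U. U \<in> Fam}"
          proof
            fix x assume "x \<in> topspace mtopology"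
            then obtain U where "U \<in> Fam" "{x} \<subseteq> mtopology closure_of U" using finprop[of "{x}"] by auto
            then show "x \<in> \<Union> {mtopology closure_of U |U. U \<in> Fam}" by blast
          qed
        qed (use closure_of_subset_topspace[of mtopology] in auto)
      qed
      then obtain \<V> where V: "\<V> \<subseteq> Fam" "countable \<V>" "\<V> \<in> K_Omega mtopology"
        using KOL unfolding K_Omega_Lindelof_def by blast
      define gs where "gs v = (SOME g. g \<in> A \<and> H \<subseteq> E g \<and> (\<exists>W. v = (Vg g \<union> Tm m) - mtopology closure_of W))" for v
      have gs: "gs v \<in> A \<and> H \<subseteq> E (gs v) \<and> (\<exists>W. v = (Vg (gs v) \<union> Tm m) - mtopology closure_of W)" if v: "v \<in> \<V>" for v
      proof -
        have "v \<in> Fam" using v V(1) by blast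
        then have "\<exists>g. g \<in> A \<and> H \<subseteq> E g \<and> (\<exists>W. v = (Vg g \<union> Tm m) - mtopology closure_of W)"
          unfolding Fam_def by blast
        then show ?thesis unfolding gs_def by (rule someI_ex)
      qed
      show ?thesis
      proof (intro exI conjI ballI allI impI)
        show "countable (gs ` \<V>)" using V(2) by simp
        show "gs ` \<V> \<subseteq> A" using gs by blast
        show "H \<subseteq> E g" if "g \<in> gs ` \<V>" for g using gs that by blast
        fix F assume F: "finite F \<and> F \<subseteq> M"
        then obtain v where v: "v \<in> \<V>" "F \<subseteq> mtopology closure_of v" using K_OmegaD(4)[OF V(3)] by auto
        obtain W where "v = (Vg (gs v) \<union> Tm m) - mtopology closure_of W" using gs[OF v(1)] by blast
        then have "v \<subseteq> Vg (gs v) \<union> Tm m" by blast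
        then have "mtopology closure_of v \<subseteq> mtopology closure_of (Vg (gs v)) \<union> mtopology closure_of (Tm m)"
          by (metis closure_of_Un closure_of_mono)
        then show "\<exists>g\<in>gs ` \<V>. F \<subseteq> mtopology closure_of (Vg g) \<union> mtopology closure_of (Tm m)"
          using v by blast
      qed
    qed
    define P where "P H m B \<longleftrightarrow> countable B \<and> B \<subseteq> A \<and> (\<forall>g\<in>B. H \<subseteq> E g) \<and>
        (\<forall>F. finite F \<and> F \<subseteq> M \<longrightarrow> (\<exists>g\<in>B. F \<subseteq> mtopology closure_of (Vg g) \<union> mtopology closure_of (Tm m)))"
      for H m B
    define BB where "BB H m = (SOME B. P H m B)" for H m
    have BB: "P H m (BB H m)" if "finite H" "H \<subseteq> M" for H m
      unfolding BB_def by (rule someI_ex) (use fam[OF that, of m] in \<open>simp add: P_def\<close>)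
    define Bh where "Bh H = (\<Union>m. BB H m)" for H
    have Bh1: "countable (Bh H) \<and> Bh H \<subseteq> A \<and> (\<forall>g\<in>Bh H. H \<subseteq> E g)" if "finite H" "H \<subseteq> M" for H
    proof -
      have b: "countable (BB H m)" "BB H m \<subseteq> A" "\<forall>g\<in>BB H m. H \<subseteq> E g" for m
        using BB[OF that, of m] unfolding P_def by auto
      have "countable (Bh H)" unfolding Bh_def using b(1) by auto
      moreover have "Bh H \<subseteq> A" unfolding Bh_def using b(2) by blast
      moreover have "\<forall>g\<in>Bh H. H \<subseteq> E g" unfolding Bh_def using b(3) by blast
      ultimately show ?thesis by blast
    qed
    have Bh2: "\<exists>g\<in>Bh H. F \<subseteq> mtopology closure_of (Vg g)"
      if H: "finite H" "H \<subseteq> M" and F: "finite F" "F \<subseteq> M - C" for H F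
    proof -
      obtain m where m: "F \<inter> mtopology closure_of (Tm m) = {}" using Tsep[OF F] by blast
      obtain g where g: "g \<in> BB H m" "F \<subseteq> mtopology closure_of (Vg g) \<union> mtopology closure_of (Tm m)"
        using BB[OF H, of m] F unfolding P_def by blast
      have "F \<subseteq> mtopology closure_of (Vg g)" using g(2) m by blast
      moreover have "g \<in> Bh H" using g(1) unfolding Bh_def by blast
      ultimately show ?thesis by blast
    qed
    define step where "step Q = Q \<union> (\<Union>H\<in>{H. finite H \<and> H \<subseteq> Q \<inter> M}. \<Union>g\<in>Bh H. Mg g)" for Q
    define Qs where "Qs k = (step ^^ k) C" for k
    have Qs0: "Qs 0 = C" unfolding Qs_def by simp
    have QsS: "Qs (Suc k) = step (Qs k)" for k unfolding Qs_def by simp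
    have stepc: "countable (step Q)" if Q: "countable Q" for Q
    proof -
      have "countable (Q \<inter> M)" by (rule countable_subset[OF Int_lower1 Q])
      then have c1: "countable {H. finite H \<and> H \<subseteq> Q \<inter> M}"
        by (rule countable_Collect_finite_subset)
      have "countable (\<Union>g\<in>Bh H. Mg g)" if "H \<in> {H. finite H \<and> H \<subseteq> Q \<inter> M}" for H
      proof -
        have "countable (Bh H)" using Bh1[of H] that by auto
        then show ?thesis by (rule countable_UN[OF _ Mgc])
      qed
      then have "countable (\<Union>H\<in>{H. finite H \<and> H \<subseteq> Q \<inter> M}. \<Union>g\<in>Bh H. Mg g)"
        by (rule countable_UN[OF c1])
      then show ?thesis unfolding step_def using Q by simp
    qed
    have Qsc: "countable (Qs k)" for k
      by (induction k) (use Ccount Qs0 QsS stepc in auto)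
    have Qsmono: "Qs k \<subseteq> Qs k'" if "k \<le> k'" for k k'
      using lift_Suc_mono_le[of Qs, OF _ that] QsS unfolding step_def by auto
    define Q where "Q = (\<Union>k. Qs k)"
    have Qc: "countable Q" unfolding Q_def using Qsc by auto
    have CQ: "C \<subseteq> Q" unfolding Q_def using Qs0 by blast
    have Hk: "\<exists>k. H \<subseteq> Qs k" if H: "finite H" "H \<subseteq> Q" for H
    proof -
      have "\<forall>x\<in>H. eventually (\<lambda>k. x \<in> Qs k) sequentially"
      proof
        fix x assume "x \<in> H"
        then obtain k0 where "x \<in> Qs k0" using H unfolding Q_def by blast
        then show "eventually (\<lambda>k. x \<in> Qs k) sequentially"
          unfolding eventually_sequentially using Qsmono by blast
      qed
      then have "eventually (\<lambda>k. \<forall>x\<in>H. x \<in> Qs k) sequentially"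
        using H by (intro eventually_ball_finite) auto
      then obtain k where "\<forall>x\<in>H. x \<in> Qs k" using eventually_sequentially by auto
      then show ?thesis by blast
    qed
    have MgQ: "Mg g \<subseteq> Q" if H: "finite H" "H \<subseteq> Q \<inter> M" and g: "g \<in> Bh H" for H g
    proof -
      obtain k where k: "H \<subseteq> Qs k" using Hk[of H] H by blast
      have "Mg g \<subseteq> step (Qs k)" unfolding step_def using H k g by blast
      then show ?thesis unfolding Q_def using QsS by blast
    qed
    define B where "B = (\<Union>H\<in>{H. finite H \<and> H \<subseteq> Q \<inter> M}. Bh H)"
    have Bc: "countable B"
    proof -
      have "countable (Q \<inter> M)" by (rule countable_subset[OF Int_lower1 Qc])
      then have c1: "countable {H. finite H \<and> H \<subseteq> Q \<inter> M}"
        by (rule countable_Collect_finite_subset)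
      have "countable (Bh H)" if "H \<in> {H. finite H \<and> H \<subseteq> Q \<inter> M}" for H
        using Bh1[of H] that by auto
      then show ?thesis unfolding B_def by (rule countable_UN[OF c1])
    qed
    have BA: "B \<subseteq> A" unfolding B_def using Bh1 by blast
    then have BQ: "B \<subseteq> topspace (Qp mtopology)" using AQ by blast
    have "f \<in> Qp mtopology closure_of B"
      unfolding Qp_closure[OF BQ]
    proof (intro conjI allI impI fQ)
      fix F assume F: "finite F \<and> F \<subseteq> topspace mtopology"
      then have FM: "finite F" "F \<subseteq> M" by auto
      define H where "H = F \<inter> Q"
      have H: "finite H" "H \<subseteq> Q \<inter> M" using FM unfolding H_def by auto
      have F': "finite (F - Q)" "F - Q \<subseteq> M - C" using FM CQ by auto
      obtain g where g: "g \<in> Bh H" "F - Q \<subseteq> mtopology closure_of (Vg g)"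
        using Bh2[OF H(1) _ F'] H(2) by blast
      have HE: "H \<subseteq> E g" using Bh1[of H] H g(1) by blast
      have gB: "g \<in> B" unfolding B_def using H g(1) by blast
      have "g x = f x" if x: "x \<in> F" for x
      proof (cases "x \<in> Q")
        case True
        then have "x \<in> E g" using HE x unfolding H_def by blast
        then show ?thesis unfolding E_def by simp
      next
        case False
        then have "x \<in> mtopology closure_of (Vg g)" using g(2) x by blast
        moreover have "x \<notin> Mg g" using MgQ[OF H g(1)] False by blast
        ultimately have "x \<in> E g" by (rule EMg)
        then show ?thesis unfolding E_def by simp
      qed
      then show "\<exists>s\<in>B. \<forall>x\<in>F. s x = f x" using gB by blast
    qed
    then show ?thesis using Bc BA by blast
  qed
qed

end


theorem corollary3p7:
  fixes X :: "'a topology"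
  assumes "metrizable_space X"
  shows "K_Omega_Lindelof X \<longleftrightarrow> countable_tightness (Qp X)"
proof -
  obtain M d where md: "Metric_space M d" "X = Metric_space.mtopology M d"
    using assms unfolding metrizable_space_def by blast
  show ?thesis
  proof
    assume "K_Omega_Lindelof X"
    then show "countable_tightness (Qp X)"
      using Metric_space.KOL_imp_tight[OF md(1)] md(2) by simp
  next
    assume "countable_tightness (Qp X)"
    then show "K_Omega_Lindelof X" by (rule tight_imp_KOL)
  qed
qed

end
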